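(* Let $A=\{(0,0,0),(0,1,0),(1,0,0),(1,1,0)\}\subset\mathbb{R}^3$ and let $\pi\subset\mathbb{R}^3$ be the plane $x=\tfrac12$. Then the set $\Pi$ of points $M\in\pi\cap\mathbb{Q}^3$ such that the Euclidean distance $|MR|$ is rational for every $R\in A$ is dense in $\pi$ (with the Euclidean topology).
   Context: No further context is needed. *)

theory Defs
  imports "HOL-Analysis.Analysis"
begin

text \<open>Points of R^3 are triples (x,y,z) :: real * real * real; the product topology
on this type coincides with the Euclidean topology (product metric is the max/l2-equivalent one).\<close>

definition setA :: "(real \<times> real \<times> real) set" where
  "setA = {(0,0,0), (0,1,0), (1,0,0), (1,1,0)}"

definition plane_pi :: "(real \<times> real \<times> real) set" where
  "plane_pi = {(x,y,z). x = 1/2}"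

definition edist3 :: "real \<times> real \<times> real \<Rightarrow> real \<times> real \<times> real \<Rightarrow> real" where
  "edist3 p q = (case p of (x1,y1,z1) \<Rightarrow> case q of (x2,y2,z2) \<Rightarrow>
      sqrt ((x1 - x2)^2 + (y1 - y2)^2 + (z1 - z2)^2))"

definition setPi :: "(real \<times> real \<times> real) set" where
  "setPi = {M. M \<in> plane_pi \<and> fst M \<in> \<rat> \<and> fst (snd M) \<in> \<rat> \<and> snd (snd M) \<in> \<rat>
              \<and> (\<forall>R\<in>setA. edist3 M R \<in> \<rat>)}"

end

theory Submission
  imports Defs
begin

definition Fd :: "real \<Rightarrow> real" where "Fd m = 4/(1+m^2)"
definition Fden :: "real \<Rightarrow> real \<Rightarrow> real" where "Fden m w = 2*m*w - Fd m * m^2"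
definition Ft :: "real \<Rightarrow> real \<Rightarrow> real" where "Ft m w = (w^2+1)/Fden m w"
definition FZ :: "real \<Rightarrow> real \<Rightarrow> real" where "FZ m w = m * Ft m w - w"
definition FY :: "real \<Rightarrow> real \<Rightarrow> real" where "FY m w = (Ft m w - m^2*(Ft m w - Fd m))/2"
definition F :: "real \<Rightarrow> real \<Rightarrow> real \<times> real \<times> real" where
  "F m w = (1/2, FY m w / 2, FZ m w / 2)"

lemma key_alg:
  assumes "Fden m w \<noteq> 0"
  shows "(FY m w)^2 + (FZ m w)^2 + 1 = ((Ft m w + m^2*(Ft m w - Fd m))/2)^2"
    and "(FY m w - 2)^2 + (FZ m w)^2 + 1 = (((Ft m w - Fd m) + m^2*Ft m w)/2)^2"
proof -
  define t where "t = Ft m w"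
  define d where "d = Fd m"
  have td: "t * (2*m*w - d*m^2) = w^2+1" using assms unfolding t_def d_def Ft_def Fden_def by simp
  have pos: "1+m^2 > 0" by (simp add: add_pos_nonneg)
  have dm: "d*(1+m^2) = 4" unfolding d_def Fd_def using pos by (simp add: field_simps)
  have c: "(FZ m w)^2 + 1 = m^2*t*(t-d)"
  proof -
    have "(FZ m w)^2 + 1 = m^2*t^2 - 2*m*t*w + (w^2+1)" unfolding FZ_def t_def[symmetric]
      by (simp add: power2_eq_square algebra_simps)
    also have "\<dots> = m^2*t*(t-d)" unfolding td[symmetric] by (simp add: power2_eq_square algebra_simps)
    finally show ?thesis .
  qed
  have Y: "FY m w = (t - m^2*(t-d))/2" unfolding FY_def t_def d_def by simp
  show "(FY m w)^2 + (FZ m w)^2 + 1 = ((Ft m w + m^2*(Ft m w - Fd m))/2)^2"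
  proof -
    have "(FY m w)^2 + (FZ m w)^2 + 1 = ((t - m^2*(t-d))/2)^2 + m^2*t*(t-d)"
      unfolding Y by (simp only: add.assoc c)
    then show ?thesis unfolding t_def[symmetric] d_def[symmetric]
      by (simp add: power2_eq_square field_simps)
  qed
  have Y2: "FY m w - 2 = ((t-d) - m^2*t)/2" using Y dm by (simp add: algebra_simps)
  show "(FY m w - 2)^2 + (FZ m w)^2 + 1 = (((Ft m w - Fd m) + m^2*Ft m w)/2)^2"
  proof -
    have "(FY m w - 2)^2 + (FZ m w)^2 + 1 = (((t-d) - m^2*t)/2)^2 + m^2*t*(t-d)"
      unfolding Y2 by (simp only: add.assoc c)
    then show ?thesis unfolding t_def[symmetric] d_def[symmetric]
      by (simp add: power2_eq_square field_simps)
  qed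
qed

lemma F_in:
  assumes "m \<in> \<rat>" "w \<in> \<rat>" "Fden m w \<noteq> 0"
  shows "F m w \<in> setPi"
proof -
  have q: "Fd m \<in> \<rat>" "Ft m w \<in> \<rat>" "FY m w \<in> \<rat>" "FZ m w \<in> \<rat>"
    using assms by (auto simp: Fd_def Ft_def Fden_def FY_def FZ_def)
  define R where "R = (Ft m w + m^2*(Ft m w - Fd m))/2"
  define S where "S = ((Ft m w - Fd m) + m^2*Ft m w)/2"
  have RS: "R \<in> \<rat>" "S \<in> \<rat>" using q assms(1) by (auto simp: R_def S_def)
  have e1: "(1/2)^2 + (FY m w/2)^2 + (FZ m w/2)^2 = (R/2)^2"
    using key_alg(1)[OF assms(3)] unfolding R_def[symmetric] by (simp add: power_divide field_simps)
  have e2: "(1/2)^2 + (FY m w/2 - 1)^2 + (FZ m w/2)^2 = (S/2)^2"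
  proof -
    have "(FY m w/2 - 1)^2 = (FY m w - 2)^2/4" by (simp add: power2_eq_square field_simps)
    then show ?thesis using key_alg(2)[OF assms(3)] unfolding S_def[symmetric]
      by (simp add: power_divide field_simps)
  qed
  have a1: "sqrt ((1/2)^2 + (FY m w/2)^2 + (FZ m w/2)^2) \<in> \<rat>"
    unfolding e1 using RS by simp
  have a2: "sqrt ((1/2)^2 + (FY m w/2 - 1)^2 + (FZ m w/2)^2) \<in> \<rat>"
    unfolding e2 using RS by simp
  have a3: "sqrt ((1/2 - 1)^2 + (FY m w/2)^2 + (FZ m w/2)^2) \<in> \<rat>"
    using a1 by (simp add: power2_eq_square)
  have a4: "sqrt ((1/2 - 1)^2 + (FY m w/2 - 1)^2 + (FZ m w/2)^2) \<in> \<rat>"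
    using a2 by (simp add: power2_eq_square)
  show ?thesis
    unfolding setPi_def setA_def plane_pi_def F_def edist3_def
    using q a1 a2 a3 a4 by auto
qed

lemma inverse_exists:
  fixes y0 z0 :: real
  shows "\<exists>m w. Fden m w \<noteq> 0 \<and> F m w = (1/2, y0, z0)"
proof -
  define Y0 where "Y0 = 2*y0"
  define Z0 where "Z0 = 2*z0"
  define c where "c = Z0^2 + 1"
  define R where "R = sqrt (Y0^2 + c)"
  define S where "S = sqrt ((Y0-2)^2 + c)"
  define t where "t = R + Y0"
  define p where "p = S + Y0 - 2"
  define d where "d = t - p"
  define m where "m = sqrt ((4-d)/d)"
  define w where "w = m*t - Z0"
  have cpos: "c > 0" unfolding c_def by (simp add: add_nonneg_pos)
  have R2: "R^2 = Y0^2 + c" unfolding R_def using cpos by (simp add: add_nonneg_pos)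
  have S2: "S^2 = (Y0-2)^2 + c" unfolding S_def using cpos by (simp add: add_nonneg_pos)
  have Rgt: "R > \<bar>Y0\<bar>"
  proof -
    have "sqrt (Y0^2) < R" unfolding R_def using cpos by (intro real_sqrt_less_mono) simp
    then show ?thesis by simp
  qed
  have Sgt: "S > \<bar>Y0-2\<bar>"
  proof -
    have "sqrt ((Y0-2)^2) < S" unfolding S_def using cpos by (intro real_sqrt_less_mono) simp
    then show ?thesis by simp
  qed
  have tpos: "t > 0" unfolding t_def using Rgt by linarith
  have ppos: "p > 0" unfolding p_def using Sgt by linarith
  have tc: "t^2 - c = 2*Y0*t" unfolding t_def using R2 by (simp add: power2_eq_square algebra_simps)
  have pc: "p^2 - c = 2*(Y0-2)*p" unfolding p_def using S2 by (simp add: power2_eq_square algebra_simps)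
  have RS: "(R-S)*(R+S) = 4*(Y0-1)" using R2 S2 by (simp add: power2_eq_square algebra_simps)
  have RSlt: "\<bar>R-S\<bar> < 2"
  proof (rule ccontr)
    assume "\<not> \<bar>R-S\<bar> < 2"
    then have "2*(R+S) \<le> \<bar>R-S\<bar>*(R+S)" using Rgt Sgt by (intro mult_right_mono) auto
    also have "\<dots> = 4*\<bar>Y0-1\<bar>" using RS Rgt Sgt by (metis abs_mult abs_of_pos add_pos_pos abs_ge_zero order_le_less_trans abs_of_nonneg mult.commute zero_less_numeral abs_numeral le_less)
    finally show False using Rgt Sgt by (auto simp: abs_if split: if_split_asm)
  qed
  have d0: "d > 0" "d < 4" unfolding d_def t_def p_def using RSlt by linarith+
  have m2: "m^2 = (4-d)/d" unfolding m_def using d0 by simp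
  have Fdm: "Fd m = d" unfolding Fd_def m2 using d0 by (simp add: field_simps)
  have curve: "(t^2 - c)*p - (p^2-c)*t = 4*t*p" unfolding tc pc by (simp add: algebra_simps)
  have cd: "c*d = (4-d)*t*p" using curve unfolding d_def by (simp add: power2_eq_square algebra_simps)
  have cm: "c = m^2*t*p" unfolding m2 using cd d0 by (simp add: field_simps)
  have den: "t * Fden m w = w^2+1"
  proof -
    have "w^2 + 1 = m^2*t^2 - 2*m*t*Z0 + c" unfolding w_def c_def by (simp add: power2_eq_square algebra_simps)
    also have "\<dots> = t * (2*m*w - d*m^2)" unfolding cm w_def p_def[symmetric] d_def
      by (simp add: power2_eq_square algebra_simps)
    finally show ?thesis unfolding Fden_def Fdm by simp
  qed
  have denne: "Fden m w \<noteq> 0"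
  proof
    assume "Fden m w = 0"
    then have "w^2 + 1 = 0" using den by simp
    moreover have "w^2 + 1 > 0" by (simp add: add_nonneg_pos)
    ultimately show False by simp
  qed
  have Ftt: "Ft m w = t" unfolding Ft_def using den denne by (simp add: field_simps)
  have FZ: "FZ m w = Z0" unfolding FZ_def Ftt by (simp add: w_def)
  have FY: "FY m w = Y0"
  proof -
    have pd: "t - d = p" unfolding d_def by simp
    have "FY m w = (t - m^2*p)/2" unfolding FY_def Ftt Fdm pd ..
    also have "m^2*p = c/t" using cm tpos by (simp add: field_simps)
    also have "(t - c/t)/2 = (t^2 - c)/(2*t)" using tpos by (simp add: field_simps power2_eq_square)
    also have "\<dots> = Y0" unfolding tc using tpos by simp
    finally show ?thesis .
  qed
  have "F m w = (1/2, y0, z0)" using FY FZ unfolding F_def Y0_def Z0_def by simp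
  then show ?thesis using denne by blast
qed

theorem theorem3p2:
  shows "setPi \<subseteq> plane_pi \<and> plane_pi \<subseteq> closure setPi"
proof
  show "setPi \<subseteq> plane_pi" unfolding setPi_def by auto
  show "plane_pi \<subseteq> closure setPi"
  proof
    fix x assume "x \<in> plane_pi"
    then obtain y0 z0 where x: "x = (1/2, y0, z0)" unfolding plane_pi_def by auto
    obtain m0 w0 where mw: "Fden m0 w0 \<noteq> 0" "F m0 w0 = x" using inverse_exists x by blast
    have "m0 \<in> closure \<rat>" "w0 \<in> closure \<rat>" using Rats_closure_real by auto
    then obtain a b where ab: "\<forall>n. a n \<in> \<rat>" "a \<longlonglongrightarrow> m0" "\<forall>n. b n \<in> \<rat>" "b \<longlonglongrightarrow> w0"
      unfolding closure_sequential by meson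
    have pos0: "1 + m0^2 > 0" by (simp add: add_pos_nonneg)
    then have pos: "1 + m0^2 \<noteq> 0" by simp
    have ld: "(\<lambda>n. Fden (a n) (b n)) \<longlonglongrightarrow> Fden m0 w0"
      unfolding Fden_def Fd_def using ab pos by (auto intro!: tendsto_intros)
    have ev: "eventually (\<lambda>n. Fden (a n) (b n) \<noteq> 0) sequentially"
      using tendsto_imp_eventually_ne[OF ld mw(1)] .
    have lF: "(\<lambda>n. F (a n) (b n)) \<longlonglongrightarrow> F m0 w0"
      unfolding F_def FY_def FZ_def Ft_def
      using ab ld mw(1) pos unfolding Fd_def
      by (auto intro!: tendsto_intros)
    have "eventually (\<lambda>n. F (a n) (b n) \<in> closure setPi) sequentially"
      using ev by eventually_elim (use ab F_in closure_subset in blast)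
    then show "x \<in> closure setPi"
      using Lim_in_closed_set[OF closed_closure _ _ lF] mw(2) by auto
  qed
qed

end
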